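(* Let $S\subseteq\mathbb{S}$ be nonempty. Then there exists a closed s-convex set $C\subseteq\mathbb{S}$ with $S\subseteq C$ if and only if there exist $u\in\mathbb{R}^n$ with $\|u\|=1$ and $\alpha>0$ such that $S\subseteq\mathbb{S}\cap\{x\in\mathbb{R}^n\mid\langle x,u\rangle\ge\alpha\}$.
   Context: Standing setting: $n\ge 2$; $\mathbb{R}^n$ carries the usual inner product $\langle\cdot,\cdot\rangle$ and Euclidean norm $\|\cdot\|$; $o$ denotes the zero vector. $\Phi:\mathbb{R}^n\to\mathbb{R}_+:=[0,\infty)$ is a continuous function with $\Phi(tx)=t\Phi(x)$ for all $x\in\mathbb{R}^n$, $t\ge 0$, and $\Phi(x)=0$ iff $x=o$. Set $\mathbb{S}:=\{x\in\mathbb{R}^n\mid \Phi(x)=1\}$ (with the topology induced from $\mathbb{R}^n$), and $\rho:\mathbb{R}^n\to\{o\}\cup\mathbb{S}$, $\rho(x):=x/\Phi(x)$ for $x\neq o$, $\rho(o):=o$. For $x,y\in\mathbb{S}$, $\lambda\in[0,1]$, $\lambda x+_s(1-\lambda)y:=\rho(\lambda x+(1-\lambda)y)$. A nonempty set $S\subseteq\mathbb{S}$ is called s-convex if $\lambda x+_s(1-\lambda)y\in S$ for all $x,y\in S$ and $\lambda\in[0,1]$. *)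

theory Defs
  imports "HOL-Analysis.Analysis"
begin

definition gauge_fun :: "('a::euclidean_space \<Rightarrow> real) \<Rightarrow> bool" where
  "gauge_fun Phi \<longleftrightarrow> continuous_on UNIV Phi \<and> (\<forall>x. Phi x \<ge> 0)
     \<and> (\<forall>x. \<forall>t::real. t \<ge> 0 \<longrightarrow> Phi (t *\<^sub>R x) = t * Phi x)
     \<and> (\<forall>x. Phi x = 0 \<longleftrightarrow> x = 0)"

definition sphS :: "('a::euclidean_space \<Rightarrow> real) \<Rightarrow> 'a set" where
  "sphS Phi = {x. Phi x = 1}"

definition rho :: "('a::euclidean_space \<Rightarrow> real) \<Rightarrow> 'a \<Rightarrow> 'a" where
  "rho Phi x = (if x = 0 then 0 else x /\<^sub>R Phi x)"

definition s_comb :: "('a::euclidean_space \<Rightarrow> real) \<Rightarrow> real \<Rightarrow> 'a \<Rightarrow> 'a \<Rightarrow> 'a" where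
  "s_comb Phi lam x y = rho Phi (lam *\<^sub>R x + (1 - lam) *\<^sub>R y)"

definition s_convex :: "('a::euclidean_space \<Rightarrow> real) \<Rightarrow> 'a set \<Rightarrow> bool" where
  "s_convex Phi S \<longleftrightarrow> S \<noteq> {} \<and> S \<subseteq> sphS Phi \<and>
     (\<forall>x\<in>S. \<forall>y\<in>S. \<forall>lam\<in>{0..1}. s_comb Phi lam x y \<in> S)"

end

theory Submission
  imports Defs
begin

lemma g_scale: "gauge_fun Phi \<Longrightarrow> t \<ge> 0 \<Longrightarrow> Phi (t *\<^sub>R x) = t * Phi x"
  unfolding gauge_fun_def by blast

lemma g_zero: "gauge_fun Phi \<Longrightarrow> Phi x = 0 \<longleftrightarrow> x = 0"
  unfolding gauge_fun_def by blast

lemma g_pos: "gauge_fun Phi \<Longrightarrow> x \<noteq> 0 \<Longrightarrow> Phi x > 0"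
  unfolding gauge_fun_def by (metis order_le_less)

lemma g_cont: "gauge_fun Phi \<Longrightarrow> continuous_on A Phi"
  unfolding gauge_fun_def using continuous_on_subset by blast

lemma g_lower:
  fixes Phi :: "'a::euclidean_space \<Rightarrow> real"
  assumes g: "gauge_fun Phi"
  shows "\<exists>m>0. \<forall>x. m * norm x \<le> Phi x"
proof -
  obtain b :: 'a where b: "b \<in> Basis" using nonempty_Basis by blast
  have ne: "sphere (0::'a) 1 \<noteq> {}" using b by (auto intro!: exI[of _ b])
  obtain x0 where x0: "x0 \<in> sphere 0 1" "\<forall>y\<in>sphere 0 1. Phi x0 \<le> Phi y"
    using continuous_attains_inf[OF compact_sphere ne g_cont[OF g]] by blast
  have "x0 \<noteq> 0" using x0 by auto
  hence m: "Phi x0 > 0" using g_pos[OF g] by blast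
  show ?thesis
  proof (intro exI[of _ "Phi x0"] conjI allI m)
    fix x :: 'a
    show "Phi x0 * norm x \<le> Phi x"
    proof (cases "x = 0")
      case True thus ?thesis using g_zero[OF g, of 0] by simp
    next
      case False
      have "(1/norm x) *\<^sub>R x \<in> sphere 0 1" using False by simp
      hence "Phi x0 \<le> Phi ((1/norm x) *\<^sub>R x)" using x0 by blast
      also have "\<dots> = Phi x / norm x" using g_scale[OF g, of "1/norm x" x] by simp
      finally show ?thesis using False by (simp add: field_simps)
    qed
  qed
qed

lemma rho_nz:
  assumes g: "gauge_fun Phi" and z: "z \<noteq> 0"
  shows "rho Phi z = (1 / Phi z) *\<^sub>R z" "Phi (rho Phi z) = 1"
proof -
  have p: "Phi z > 0" using g_pos[OF g z] .
  show "rho Phi z = (1 / Phi z) *\<^sub>R z" using z by (simp add: rho_def divide_inverse_commute)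
  then show "Phi (rho Phi z) = 1" using g_scale[OF g, of "1/Phi z" z] p by simp
qed

lemma rho_zero: "gauge_fun Phi \<Longrightarrow> rho Phi z \<in> sphS Phi \<Longrightarrow> z \<noteq> 0"
  using g_zero[of Phi 0] by (auto simp: rho_def sphS_def)

lemma sphS_compact:
  fixes Phi :: "'a::euclidean_space \<Rightarrow> real"
  assumes g: "gauge_fun Phi"
  shows "compact (sphS Phi)"
proof -
  obtain m where m: "m > 0" "\<forall>x. m * norm x \<le> Phi x" using g_lower[OF g] by blast
  have cl: "closed (sphS Phi)" unfolding sphS_def
    using closed_Collect_eq[OF g_cont[OF g], of "\<lambda>_. 1"] by (simp add: continuous_on_const)
  have "sphS Phi \<subseteq> cball 0 (1/m)"
  proof
    fix x assume "x \<in> sphS Phi"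
    hence "m * norm x \<le> 1" using m unfolding sphS_def by (metis mem_Collect_eq)
    thus "x \<in> cball 0 (1/m)" using m by (simp add: field_simps)
  qed
  hence "bounded (sphS Phi)" using bounded_cball bounded_subset by blast
  thus ?thesis using cl by (simp add: compact_eq_bounded_closed)
qed

theorem mainTheorem7:
  fixes Phi :: "'a::euclidean_space \<Rightarrow> real" and S :: "'a set"
  assumes "DIM('a) \<ge> 2"
    and "gauge_fun Phi"
    and "S \<noteq> {}" and "S \<subseteq> sphS Phi"
  shows "(\<exists>C. s_convex Phi C \<and> closedin (top_of_set (sphS Phi)) C \<and> S \<subseteq> C)
     \<longleftrightarrow> (\<exists>u \<alpha>. norm u = 1 \<and> \<alpha> > 0 \<and> S \<subseteq> sphS Phi \<inter> {x. x \<bullet> u \<ge> \<alpha>})"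
proof
  note g = assms(2)
  assume "\<exists>C. s_convex Phi C \<and> closedin (top_of_set (sphS Phi)) C \<and> S \<subseteq> C"
  then obtain C where sc: "s_convex Phi C" and cc: "closedin (top_of_set (sphS Phi)) C"
    and SC: "S \<subseteq> C" by blast
  have Csub: "C \<subseteq> sphS Phi" and Ccomb: "\<And>x y lam. x \<in> C \<Longrightarrow> y \<in> C \<Longrightarrow> lam \<in> {0..1} \<Longrightarrow> s_comb Phi lam x y \<in> C"
    using sc unfolding s_convex_def by blast+
  have "closed C" using closedin_closed_trans[OF cc compact_imp_closed[OF sphS_compact[OF g]]] .
  have "compact (sphS Phi \<inter> C)" by (rule compact_Int_closed[OF sphS_compact[OF g] \<open>closed C\<close>])
  moreover have "sphS Phi \<inter> C = C" using Csub by blast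
  ultimately have cC: "compact C" by simp
  define K where "K = {t *\<^sub>R x | t x. t > 0 \<and> x \<in> C}"
  have CK: "C \<subseteq> K"
  proof
    fix x assume "x \<in> C"
    hence "\<exists>t y. x = t *\<^sub>R y \<and> t > 0 \<and> y \<in> C"
      by (intro exI[of _ "1::real"] exI[of _ x]) simp
    thus "x \<in> K" unfolding K_def by simp
  qed
  have zK: "0 \<notin> K"
  proof
    assume "0 \<in> K"
    hence "\<exists>t x. 0 = t *\<^sub>R x \<and> t > 0 \<and> x \<in> C" unfolding K_def by simp
    then obtain t x where h: "0 = t *\<^sub>R x" "t > 0" "x \<in> C" by blast
    from h(1,2) have x0: "x = 0" by (metis scaleR_eq_0_iff less_irrefl)
    have "Phi x = 1" using Csub h(3) unfolding sphS_def by blast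
    moreover have "Phi 0 = 0" using g_zero[OF g] by simp
    ultimately show False using x0 by simp
  qed
  have convK: "convex K"
  proof (rule convexI)
    fix a b and mu nu :: real
    assume a: "a \<in> K" and b: "b \<in> K" and mu: "0 \<le> mu" and nu: "0 \<le> nu" and s: "mu + nu = 1"
    have "\<exists>t x. a = t *\<^sub>R x \<and> t > 0 \<and> x \<in> C" using a unfolding K_def by simp
    then obtain t x where tx: "t > 0" "x \<in> C" "a = t *\<^sub>R x" by blast
    have "\<exists>t x. b = t *\<^sub>R x \<and> t > 0 \<and> x \<in> C" using b unfolding K_def by simp
    then obtain s' y where sy: "s' > 0" "y \<in> C" "b = s' *\<^sub>R y" by blast
    show "mu *\<^sub>R a + nu *\<^sub>R b \<in> K"
    proof (cases "mu = 0 \<or> nu = 0")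
      case True
      thus ?thesis
      proof
        assume m0: "mu = 0"
        hence "nu = 1" using s by simp
        thus ?thesis using m0 b by simp
      next
        assume n0: "nu = 0"
        hence "mu = 1" using s by simp
        thus ?thesis using n0 a by simp
      qed
    next
      case False
      define p where "p = mu * t"
      define q where "q = nu * s'"
      have p: "p > 0" "q > 0" using False mu nu tx sy by (auto simp: p_def q_def)
      define lam where "lam = p / (p + q)"
      have lam: "lam \<in> {0..1}" using p by (auto simp: lam_def)
      define z where "z = lam *\<^sub>R x + (1 - lam) *\<^sub>R y"
      have rz: "rho Phi z \<in> C" using Ccomb[OF tx(2) sy(2) lam] by (simp add: s_comb_def z_def)
      hence z0: "z \<noteq> 0" using rho_zero[OF g] Csub by blast
      have pz: "Phi z > 0" using g_pos[OF g z0] .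
      have e1: "mu *\<^sub>R a + nu *\<^sub>R b = p *\<^sub>R x + q *\<^sub>R y"
        by (simp add: tx(3) sy(3) p_def q_def)
      have e2: "(p + q) * lam = p" "(p + q) * (1 - lam) = q" using p
        by (simp_all add: lam_def field_simps)
      have "(p + q) *\<^sub>R z = ((p + q) * lam) *\<^sub>R x + ((p + q) * (1 - lam)) *\<^sub>R y"
        unfolding z_def scaleR_add_right scaleR_scaleR ..
      hence eq1: "mu *\<^sub>R a + nu *\<^sub>R b = (p + q) *\<^sub>R z" using e1 e2 by simp
      have "(p + q) *\<^sub>R z = ((p + q) * Phi z) *\<^sub>R rho Phi z"
        using rho_nz(1)[OF g z0] pz by simp
      hence eq2: "mu *\<^sub>R a + nu *\<^sub>R b = ((p + q) * Phi z) *\<^sub>R rho Phi z" using eq1 by simp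
      have pos: "(p + q) * Phi z > 0" using p pz by simp
      have "\<exists>t x. mu *\<^sub>R a + nu *\<^sub>R b = t *\<^sub>R x \<and> t > 0 \<and> x \<in> C"
        using eq2 pos rz by blast
      thus ?thesis unfolding K_def by simp
    qed
  qed
  have hK: "convex hull C \<subseteq> K" using convK CK hull_minimal by blast
  have "compact (convex hull C)" using cC compact_convex_hull by blast
  moreover have "0 \<notin> convex hull C" using hK zK by blast
  ultimately obtain a b where ab: "a \<noteq> 0" "0 < b" "\<forall>x\<in>convex hull C. inner a x > b"
    using separating_hyperplane_closed_0[OF convex_convex_hull compact_imp_closed] by metis
  show "\<exists>u \<alpha>. norm u = 1 \<and> \<alpha> > 0 \<and> S \<subseteq> sphS Phi \<inter> {x. x \<bullet> u \<ge> \<alpha>}"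
  proof (intro exI[of _ "(1/norm a) *\<^sub>R a"] exI[of _ "b / norm a"] conjI)
    show "norm ((1/norm a) *\<^sub>R a) = 1" using ab by simp
    show "b / norm a > 0" using ab by simp
    show "S \<subseteq> sphS Phi \<inter> {x. x \<bullet> ((1/norm a) *\<^sub>R a) \<ge> b / norm a}"
    proof
      fix x assume x: "x \<in> S"
      have "C \<subseteq> convex hull C" by (rule hull_subset)
      hence "x \<in> convex hull C" using SC x by blast
      hence "inner a x > b" using ab(3) by blast
      moreover have "norm a > 0" using ab by simp
      ultimately have "b / norm a \<le> inner a x / norm a" by (simp add: divide_right_mono)
      moreover have "x \<bullet> ((1/norm a) *\<^sub>R a) = inner a x / norm a" by (simp add: inner_commute)
      ultimately have "x \<bullet> ((1/norm a) *\<^sub>R a) \<ge> b / norm a" by linarith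
      moreover have "x \<in> sphS Phi" using x assms(4) by blast
      ultimately show "x \<in> sphS Phi \<inter> {x. x \<bullet> ((1/norm a) *\<^sub>R a) \<ge> b / norm a}" by simp
    qed
  qed
next
  note g = assms(2)
  assume "\<exists>u \<alpha>. norm u = 1 \<and> \<alpha> > 0 \<and> S \<subseteq> sphS Phi \<inter> {x. x \<bullet> u \<ge> \<alpha>}"
  then obtain u \<alpha> where u: "norm u = 1" and al: "\<alpha> > 0" and Su: "S \<subseteq> sphS Phi \<inter> {x. x \<bullet> u \<ge> \<alpha>}"
    by blast
  obtain m where m: "m > 0" "\<forall>x. m * norm x \<le> Phi x" using g_lower[OF g] by blast
  define c where "c = \<alpha> * m"
  have c: "c > 0" using al m by (simp add: c_def)
  define C where "C = sphS Phi \<inter> {x. c * norm x \<le> x \<bullet> u}"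
  have SC: "S \<subseteq> C"
  proof
    fix x assume x: "x \<in> S"
    hence "Phi x = 1" "\<alpha> \<le> x \<bullet> u" using Su by (auto simp: sphS_def)
    hence "m * norm x \<le> 1" using m by metis
    hence "c * norm x \<le> \<alpha>" using al by (simp add: c_def mult.assoc mult_left_le)
    thus "x \<in> C" using x Su \<open>\<alpha> \<le> x \<bullet> u\<close> by (auto simp: C_def)
  qed
  have cl: "closed {x. c * norm x \<le> x \<bullet> u}"
    by (intro closed_Collect_le continuous_intros)
  have "closedin (top_of_set (sphS Phi)) C"
    unfolding C_def using cl by (simp add: closedin_closed_Int)
  moreover have "s_convex Phi C"
    unfolding s_convex_def
  proof (intro conjI ballI)
    show "C \<noteq> {}" using SC assms(3) by blast
    show "C \<subseteq> sphS Phi" by (auto simp: C_def)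
    fix x y lam assume x: "x \<in> C" and y: "y \<in> C" and lam: "lam \<in> {0..(1::real)}"
    have x0: "x \<noteq> 0" "y \<noteq> 0" using x y g_zero[OF g, of 0] by (auto simp: C_def sphS_def)
    have xu: "c * norm x \<le> x \<bullet> u" "c * norm y \<le> y \<bullet> u" using x y by (auto simp: C_def)
    have "c * norm x > 0" "c * norm y > 0" using c x0 by auto
    hence xp: "x \<bullet> u > 0" "y \<bullet> u > 0" using xu by linarith+
    define z where "z = lam *\<^sub>R x + (1 - lam) *\<^sub>R y"
    have zu: "z \<bullet> u = lam * (x \<bullet> u) + (1 - lam) * (y \<bullet> u)" by (simp add: z_def inner_add_left)
    have l: "0 \<le> lam" "lam \<le> 1" using lam by auto
    have "z \<bullet> u > 0"
    proof (cases "lam = 0")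
      case True thus ?thesis using zu xp by simp
    next
      case False
      hence "lam * (x \<bullet> u) > 0" using l xp by simp
      moreover have "(1 - lam) * (y \<bullet> u) \<ge> 0" using l xp by simp
      ultimately show ?thesis using zu by linarith
    qed
    hence z0: "z \<noteq> 0" by auto
    have "norm z \<le> norm (lam *\<^sub>R x) + norm ((1 - lam) *\<^sub>R y)"
      unfolding z_def by (rule norm_triangle_ineq)
    also have "\<dots> = lam * norm x + (1 - lam) * norm y" using l by simp
    finally have nz: "norm z \<le> lam * norm x + (1 - lam) * norm y" .
    have "c * norm z \<le> c * (lam * norm x + (1 - lam) * norm y)"
      using mult_left_mono[OF nz] c by simp
    also have "\<dots> = lam * (c * norm x) + (1 - lam) * (c * norm y)" by (simp add: algebra_simps)
    also have "\<dots> \<le> z \<bullet> u" unfolding zu using l xu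
      by (intro add_mono mult_left_mono) auto
    finally have czu: "c * norm z \<le> z \<bullet> u" .
    have pz: "Phi z > 0" using g_pos[OF g z0] .
    have r: "rho Phi z = (1 / Phi z) *\<^sub>R z" "Phi (rho Phi z) = 1" using rho_nz[OF g z0] by auto
    have "c * norm (rho Phi z) = (c * norm z) / Phi z" using pz r(1) by simp
    also have "\<dots> \<le> (z \<bullet> u) / Phi z" using czu pz by (simp add: divide_right_mono)
    also have "\<dots> = rho Phi z \<bullet> u" using r(1) by simp
    finally show "s_comb Phi lam x y \<in> C"
      using r(2) by (simp add: C_def sphS_def s_comb_def z_def[symmetric])
  qed
  ultimately show "\<exists>C. s_convex Phi C \<and> closedin (top_of_set (sphS Phi)) C \<and> S \<subseteq> C"
    using SC by blast
qed

end
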